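(* Let $\mathcal A$ be a finite set, $\mathcal R\subset F(\mathcal A)$ finite, $\phi:F(\mathcal A)\to F(\mathcal A)$ a homomorphism, $G$ the group with presentation $\mathcal P=\langle t,\mathcal A:\mathcal R,\ t^{-1}at=\phi(a)\ (a\in\mathcal A)\rangle$, $X$ its Cayley 2-complex, and $\Lambda\subset X$ the Cayley graph of $A=\langle\mathcal A\rangle\le G$ with respect to $\mathcal A$ (containing the identity vertex). For each $\mathcal A$-edge $e$ of $X$ let $H_e:[0,1]\times[0,\infty)\to X$ be the strip map described in the context. If $C\subset X$ is compact, then there are only finitely many edges $e$ of $\Lambda$ such that the image of $H_e$ intersects $C$.
   Context: The Cayley 2-complex $X$ of $\mathcal P$ is the simply connected 2-complex whose 1-skeleton is the Cayley graph of $G$ with respect to $\mathcal A\cup\{t\}$ (vertex set $G$), with a 2-cell at each vertex for each relator. $\Lambda$ is the subgraph with vertex set $A$ and the $\mathcal A$-labeled edges between them. Strip map: let $e$ be an edge from $v$ to $w$ with label $a\in\mathcal A$. For each integer $k\ge0$, the edge path at $vt^k$ reading the word $\phi^k(a)$ ends at $wt^k$; the conjugation 2-cells (with boundaries $b\,t\,\phi(b)^{-1}t^{-1}$, $b\in\mathcal A^{\pm1}$) attached along the edges of this path form a strip whose boundary consists of the path labeled $\phi^k(a)$ at $vt^k$, the $t$-edge from $vt^k$ to $vt^{k+1}$, the path labeled $\phi^{k+1}(a)$ at $vt^{k+1}$, and the $t$-edge from $wt^k$ to $wt^{k+1}$. $H_e$ maps $[0,1]\times[k,k+1]$ onto this strip,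 with $[0,1]\times\{k\}$ going to the path labeled $\phi^k(a)$ and $\{0\}\times[k,k+1]$, $\{1\}\times[k,k+1]$ going to the $t$-edges at $vt^k$, $wt^k$. In particular $H_e(x,0)=e(x)$ and $H_e(0,\cdot)$, $H_e(1,\cdot)$ are the edge path rays at $v$, $w$ all of whose edges are labeled $t$. *)

theory Defs
  imports "HOL-Analysis.Analysis"
begin

text \<open>Generators of the presentation P: the stable letter t (T) and the elements of the
  finite set A (A a).  A letter is a generator with an exponent sign (True = +1, False = -1).\<close>

datatype 'a gen = T | A 'a

text \<open>2-cells: one for each relator r in R, and one conjugation cell for each a in A
  (with boundary word  a t phi(a)^-1 t^-1, a cyclic conjugate of t^-1 a t phi(a)^-1).\<close>
datatype 'a cell = RelR "('a \<times> bool) list" | RelC 'a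

type_synonym 'a gword = "('a gen \<times> bool) list"

definition linv :: "'x \<times> bool \<Rightarrow> 'x \<times> bool" where
  "linv l = (fst l, \<not> snd l)"

definition winv :: "('x \<times> bool) list \<Rightarrow> ('x \<times> bool) list" where
  "winv w = rev (map linv w)"

definition reduced :: "('x \<times> bool) list \<Rightarrow> bool" where
  "reduced w \<longleftrightarrow> (\<forall>i. Suc i < length w \<longrightarrow> w ! Suc i \<noteq> linv (w ! i))"

text \<open>Elements of the free group F(A) are represented by reduced words over A.\<close>
definition free_word :: "'a set \<Rightarrow> ('a \<times> bool) list \<Rightarrow> bool" where
  "free_word Ag w \<longleftrightarrow> set w \<subseteq> Ag \<times> UNIV \<and> reduced w"

fun red_step :: "'x \<times> bool \<Rightarrow> ('x \<times> bool) list \<Rightarrow> ('x \<times> bool) list" where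
  "red_step l [] = [l]"
| "red_step l (m # r) = (if m = linv l then r else l # m # r)"

definition reduce :: "('x \<times> bool) list \<Rightarrow> ('x \<times> bool) list" where
  "reduce w = foldr red_step w []"

definition lift :: "('a \<times> bool) list \<Rightarrow> 'a gword" where
  "lift w = map (\<lambda>(a, b). (A a, b)) w"

text \<open>The homomorphism phi of F(A) is given by the images phi a of the generators.\<close>
definition phil :: "('a \<Rightarrow> ('a \<times> bool) list) \<Rightarrow> 'a \<times> bool \<Rightarrow> ('a \<times> bool) list" where
  "phil phi l = (if snd l then phi (fst l) else winv (phi (fst l)))"

fun phipow :: "('a \<Rightarrow> ('a \<times> bool) list) \<Rightarrow> nat \<Rightarrow> 'a \<Rightarrow> ('a \<times> bool) list" where
  "phipow phi 0 a = [(a, True)]"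
| "phipow phi (Suc k) a = reduce (concat (map (phil phi) (phipow phi k a)))"

definition gens :: "'a set \<Rightarrow> 'a gen set" where
  "gens Ag = insert T (A ` Ag)"

definition valid_word :: "'a set \<Rightarrow> 'a gword \<Rightarrow> bool" where
  "valid_word Ag w \<longleftrightarrow> set w \<subseteq> gens Ag \<times> UNIV"

definition cells :: "'a set \<Rightarrow> ('a \<times> bool) list set \<Rightarrow> 'a cell set" where
  "cells Ag Rs = RelR ` Rs \<union> RelC ` Ag"

fun bword :: "('a \<Rightarrow> ('a \<times> bool) list) \<Rightarrow> 'a cell \<Rightarrow> 'a gword" where
  "bword phi (RelR r) = lift r"
| "bword phi (RelC a) = [(A a, True), (T, True)] @ winv (lift (phi a)) @ [(T, False)]"

inductive weq :: "'a set \<Rightarrow> ('a \<times> bool) list set \<Rightarrow> ('a \<Rightarrow> ('a \<times> bool) list)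
    \<Rightarrow> 'a gword \<Rightarrow> 'a gword \<Rightarrow> bool"
  for Ag Rs phi where
  weq_refl: "weq Ag Rs phi w w"
| weq_sym: "weq Ag Rs phi w w' \<Longrightarrow> weq Ag Rs phi w' w"
| weq_trans: "weq Ag Rs phi u v \<Longrightarrow> weq Ag Rs phi v w \<Longrightarrow> weq Ag Rs phi u w"
| weq_cancel: "l \<in> gens Ag \<times> UNIV \<Longrightarrow> weq Ag Rs phi (u @ [l, linv l] @ v) (u @ v)"
| weq_rel: "c \<in> cells Ag Rs \<Longrightarrow> weq Ag Rs phi (u @ bword phi c @ v) (u @ v)"

section \<open>The Cayley 2-complex as a quotient of a disjoint union of cells\<close>

text \<open>Raw points: vertices (labelled by words representing elements of G), points of edges
  (edge at vertex w with label x, from w to w x, parameter in [0,1]) and points of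
  2-cells (2-cell at vertex w for relator c, parameter in the closed unit disc).\<close>
datatype 'a raw = RV "'a gword" | RE "'a gword" "'a gen" real | RC "'a gword" "'a cell" complex

definition rawpts :: "'a set \<Rightarrow> ('a \<times> bool) list set \<Rightarrow> 'a raw set" where
  "rawpts Ag Rs =
     {RV w | w. valid_word Ag w}
   \<union> {RE w x \<tau> | w x \<tau>. valid_word Ag w \<and> x \<in> gens Ag \<and> \<tau> \<in> {0..1}}
   \<union> {RC w c z | w c z. valid_word Ag w \<and> c \<in> cells Ag Rs \<and> z \<in> cball 0 1}"

text \<open>Attaching map of the 2-cell for c at vertex w: the boundary circle is divided into
  length(bword c) arcs, the j-th arc traversing the edge read by the j-th letter.\<close>
definition attach :: "('a \<Rightarrow> ('a \<times> bool) list) \<Rightarrow> 'a gword \<Rightarrow> 'a cell \<Rightarrow> complex \<Rightarrow> 'a raw" where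
  "attach phi w c z =
     (let p = bword phi c; n = length p; s = Arg2pi z / (2 * pi) in
      if n = 0 then RV w
      else (let j = nat \<lfloor>real n * s\<rfloor>; \<tau> = real n * s - real j; l = p ! j in
            if snd l then RE (w @ take j p) (fst l) \<tau>
            else RE (w @ take j p @ [l]) (fst l) (1 - \<tau>)))"

inductive_set xgen :: "'a set \<Rightarrow> ('a \<times> bool) list set \<Rightarrow> ('a \<Rightarrow> ('a \<times> bool) list)
    \<Rightarrow> ('a raw \<times> 'a raw) set"
  for Ag Rs phi where
  "\<lbrakk>valid_word Ag w; valid_word Ag w'; weq Ag Rs phi w w'\<rbrakk> \<Longrightarrow> (RV w, RV w') \<in> xgen Ag Rs phi"
| "\<lbrakk>valid_word Ag w; valid_word Ag w'; weq Ag Rs phi w w'; x \<in> gens Ag; \<tau> \<in> {0..1}\<rbrakk>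
    \<Longrightarrow> (RE w x \<tau>, RE w' x \<tau>) \<in> xgen Ag Rs phi"
| "\<lbrakk>valid_word Ag w; valid_word Ag w'; weq Ag Rs phi w w'; c \<in> cells Ag Rs; z \<in> cball 0 1\<rbrakk>
    \<Longrightarrow> (RC w c z, RC w' c z) \<in> xgen Ag Rs phi"
| "\<lbrakk>valid_word Ag w; x \<in> gens Ag\<rbrakk> \<Longrightarrow> (RE w x 0, RV w) \<in> xgen Ag Rs phi"
| "\<lbrakk>valid_word Ag w; x \<in> gens Ag\<rbrakk> \<Longrightarrow> (RE w x 1, RV (w @ [(x, True)])) \<in> xgen Ag Rs phi"
| "\<lbrakk>valid_word Ag w; c \<in> cells Ag Rs; cmod z = 1\<rbrakk> \<Longrightarrow> (RC w c z, attach phi w c z) \<in> xgen Ag Rs phi"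

definition xeq :: "'a set \<Rightarrow> ('a \<times> bool) list set \<Rightarrow> ('a \<Rightarrow> ('a \<times> bool) list)
    \<Rightarrow> ('a raw \<times> 'a raw) set" where
  "xeq Ag Rs phi = (xgen Ag Rs phi \<union> (xgen Ag Rs phi)\<inverse>)\<^sup>*"

definition Xpts :: "'a set \<Rightarrow> ('a \<times> bool) list set \<Rightarrow> ('a \<Rightarrow> ('a \<times> bool) list) \<Rightarrow> 'a raw set set" where
  "Xpts Ag Rs phi = rawpts Ag Rs // xeq Ag Rs phi"

definition cls :: "'a set \<Rightarrow> ('a \<times> bool) list set \<Rightarrow> ('a \<Rightarrow> ('a \<times> bool) list) \<Rightarrow> 'a raw \<Rightarrow> 'a raw set" where
  "cls Ag Rs phi p = xeq Ag Rs phi `` {p}"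

text \<open>Disjoint-union topology on the raw points.\<close>
definition rawtop :: "'a set \<Rightarrow> ('a \<times> bool) list set \<Rightarrow> 'a raw topology" where
  "rawtop Ag Rs = topology (\<lambda>U. U \<subseteq> rawpts Ag Rs
     \<and> (\<forall>w x. openin (top_of_set {0..1::real}) {\<tau> \<in> {0..1}. RE w x \<tau> \<in> U})
     \<and> (\<forall>w c. openin (top_of_set (cball (0::complex) 1)) {z \<in> cball 0 1. RC w c z \<in> U}))"

definition cayley_complex :: "'a set \<Rightarrow> ('a \<times> bool) list set \<Rightarrow> ('a \<Rightarrow> ('a \<times> bool) list)
    \<Rightarrow> 'a raw set topology" where
  "cayley_complex Ag Rs phi = topology (\<lambda>U. U \<subseteq> Xpts Ag Rs phi \<and> openin (rawtop Ag Rs) (\<Union>U))"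

definition cellimg :: "'a set \<Rightarrow> ('a \<times> bool) list set \<Rightarrow> ('a \<Rightarrow> ('a \<times> bool) list)
    \<Rightarrow> 'a gword \<Rightarrow> 'a cell \<Rightarrow> 'a raw set set" where
  "cellimg Ag Rs phi w c = {cls Ag Rs phi (RC w c z) | z. z \<in> cball 0 1}"

text \<open>The k-th strip of the A-edge labelled a starting at the vertex represented by u:
  the conjugation 2-cells attached along the edges of the path reading phi^k(a) at u t^k
  (for a letter b^-1 the cell for b based at the endpoint of that edge); if phi^k(a) is
  trivial, the strip degenerates to the t-edge at u t^k.\<close>
definition strip :: "'a set \<Rightarrow> ('a \<times> bool) list set \<Rightarrow> ('a \<Rightarrow> ('a \<times> bool) list)
    \<Rightarrow> 'a gword \<Rightarrow> 'a \<Rightarrow> nat \<Rightarrow> 'a raw set set" where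
  "strip Ag Rs phi u a k =
     (let base = u @ replicate k (T, True); p = phipow phi k a in
      if p = [] then {cls Ag Rs phi (RE base T \<tau>) | \<tau>. \<tau> \<in> {0..1}}
      else (\<Union>i < length p.
              cellimg Ag Rs phi
                (base @ lift (take i p) @ (if snd (p ! i) then [] else [(A (fst (p ! i)), False)]))
                (RelC (fst (p ! i)))))"

definition H_image :: "'a set \<Rightarrow> ('a \<times> bool) list set \<Rightarrow> ('a \<Rightarrow> ('a \<times> bool) list)
    \<Rightarrow> 'a gword \<Rightarrow> 'a \<Rightarrow> 'a raw set set" where
  "H_image Ag Rs phi u a = (\<Union>k. strip Ag Rs phi u a k)"

text \<open>Edges of Lambda: A-labelled edges (v, a) whose initial vertex v lies in the subgroup
  generated by A, i.e. is represented by a word over A only.\<close>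
definition Lambda_edges :: "'a set \<Rightarrow> ('a \<times> bool) list set \<Rightarrow> ('a \<Rightarrow> ('a \<times> bool) list)
    \<Rightarrow> ('a raw set \<times> 'a) set" where
  "Lambda_edges Ag Rs phi = {(cls Ag Rs phi (RV u), a) | u a. set u \<subseteq> A ` Ag \<times> UNIV \<and> a \<in> Ag}"

definition H_image_edge :: "'a set \<Rightarrow> ('a \<times> bool) list set \<Rightarrow> ('a \<Rightarrow> ('a \<times> bool) list)
    \<Rightarrow> 'a raw set \<times> 'a \<Rightarrow> 'a raw set set" where
  "H_image_edge Ag Rs phi e =
     H_image Ag Rs phi (SOME u. valid_word Ag u \<and> cls Ag Rs phi (RV u) = fst e) (snd e)"

end

theory Submission
  imports Defs
begin

lemma weq_app: "weq Ag Rs phi u v \<Longrightarrow> weq Ag Rs phi (u @ s) (v @ s)"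
proof (induction rule: weq.induct)
  case (weq_cancel l u v)
  then show ?case using weq.weq_cancel[of l Ag Rs phi u "v @ s"] by simp
next
  case (weq_rel c u v)
  then show ?case using weq.weq_rel[of c Ag Rs phi u "v @ s"] by simp
qed (auto intro: weq.intros)

lemma winv_Cons: "winv (l # s) = winv s @ [linv l]"
  by (simp add: winv_def)

lemma linv_linv[simp]: "linv (linv l) = l"
  by (simp add: linv_def)

lemma weq_cancel_word:
  "set s \<subseteq> gens Ag \<times> UNIV \<Longrightarrow> weq Ag Rs phi (u @ s @ winv s) u"
proof (induction s arbitrary: u)
  case Nil
  then show ?case by (simp add: winv_def weq_refl)
next
  case (Cons l s)
  have l: "l \<in> gens Ag \<times> UNIV" using Cons.prems by auto
  have "weq Ag Rs phi ((u @ [l]) @ s @ winv s) (u @ [l])"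
    using Cons.IH[of "u @ [l]"] Cons.prems by simp
  then have "weq Ag Rs phi (((u @ [l]) @ s @ winv s) @ [linv l]) ((u @ [l]) @ [linv l])"
    by (rule weq_app)
  moreover have "weq Ag Rs phi (u @ [l, linv l] @ []) (u @ [])"
    using l by (rule weq_cancel)
  ultimately show ?case
    by (auto simp: winv_Cons intro: weq_trans)
qed

lemma weq_rcancel:
  assumes "set s \<subseteq> gens Ag \<times> UNIV" "weq Ag Rs phi (u @ s) (v @ s)"
  shows "weq Ag Rs phi u v"
proof -
  have "weq Ag Rs phi ((u @ s) @ winv s) ((v @ s) @ winv s)" using assms(2) by (rule weq_app)
  then have "weq Ag Rs phi (u @ s @ winv s) (v @ s @ winv s)" by simp
  then show ?thesis using weq_cancel_word[OF assms(1), of Rs phi u] weq_cancel_word[OF assms(1), of Rs phi v]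
    by (meson weq_sym weq_trans)
qed

definition tsum :: "'a gword \<Rightarrow> int" where
  "tsum w = sum_list (map (\<lambda>l. if fst l = T then (if snd l then 1 else -1) else 0) w)"

lemma tsum_append[simp]: "tsum (u @ v) = tsum u + tsum v"
  by (simp add: tsum_def)
lemma tsum_Nil[simp]: "tsum [] = 0" by (simp add: tsum_def)
lemma tsum_Cons[simp]: "tsum (l # v) = (if fst l = T then (if snd l then 1 else -1) else 0) + tsum v"
  by (simp add: tsum_def)
lemma tsum_lift[simp]: "tsum (lift r) = 0"
  by (induction r) (auto simp: lift_def)
lemma winv_Nil[simp]: "winv [] = []" by (simp add: winv_def)
lemma tsum_winv[simp]: "tsum (winv w) = - tsum w"
  by (induction w) (auto simp: winv_Cons linv_def)

lemma weq_tsum: "weq Ag Rs phi u v \<Longrightarrow> tsum u = tsum v"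
proof (induction rule: weq.induct)
  case (weq_rel c u v)
  then show ?case by (cases c) auto
qed (auto simp: linv_def)

definition cl :: "'a set \<Rightarrow> ('a \<times> bool) list set \<Rightarrow> ('a \<Rightarrow> ('a \<times> bool) list) \<Rightarrow> 'a gword \<Rightarrow> 'a gword set" where
  "cl Ag Rs phi w = Collect (weq Ag Rs phi w)"

lemma cl_eq: "weq Ag Rs phi u v \<Longrightarrow> cl Ag Rs phi u = cl Ag Rs phi v"
  unfolding cl_def by (auto intro: weq_trans weq_sym)

lemma cl_eqD: "cl Ag Rs phi u = cl Ag Rs phi v \<Longrightarrow> weq Ag Rs phi u v"
  unfolding cl_def by (metis mem_Collect_eq weq_refl)

definition Fv :: "'a set \<Rightarrow> ('a \<times> bool) list set \<Rightarrow> ('a \<Rightarrow> ('a \<times> bool) list) \<Rightarrow> 'a raw \<Rightarrow> 'a gword set set" where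
  "Fv Ag Rs phi p = (case p of RV w \<Rightarrow> {cl Ag Rs phi w}
     | RE w x \<tau> \<Rightarrow> (if \<tau> = 0 then {cl Ag Rs phi w} else if \<tau> = 1 then {cl Ag Rs phi (w @ [(x, True)])}
                     else {cl Ag Rs phi w, cl Ag Rs phi (w @ [(x, True)])})
     | RC w c z \<Rightarrow> {})"

definition FF :: "'a set \<Rightarrow> ('a \<times> bool) list set \<Rightarrow> ('a \<Rightarrow> ('a \<times> bool) list) \<Rightarrow> 'a raw \<Rightarrow> 'a gword set set" where
  "FF Ag Rs phi p = (case p of RC w c z \<Rightarrow> (if cmod z = 1 then Fv Ag Rs phi (attach phi w c z)
        else {cl Ag Rs phi (w @ take j (bword phi c)) | j. j \<le> length (bword phi c)})
     | _ \<Rightarrow> Fv Ag Rs phi p)"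

lemma attach_eq:
  fixes phi :: "'a \<Rightarrow> ('a \<times> bool) list" and c :: "'a cell" and z :: complex and w :: "'a gword"
  fixes p n x j
  defines "p \<equiv> bword phi c" and "n \<equiv> length (bword phi c)"
    and "x \<equiv> real (length (bword phi c)) * (Arg2pi z / (2*pi))" and "j \<equiv> nat \<lfloor>x\<rfloor>"
  assumes "n > 0"
  shows "j < n" "real j \<le> x" "x < real j + 1"
    "attach phi w c z = (if snd (p!j) then RE (w @ take j p) (fst (p!j)) (x - real j)
        else RE (w @ take j p @ [p!j]) (fst (p!j)) (1 - (x - real j)))"
proof -
  have a0: "0 \<le> Arg2pi z" and a1: "Arg2pi z < 2*pi" using Arg2pi by auto
  have x0: "0 \<le> x" using a0 unfolding x_def by simp
  have "Arg2pi z / (2*pi) < 1" using a1 by simp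
  moreover have "real n > 0" using assms(5) by simp
  ultimately have "real n * (Arg2pi z / (2*pi)) < real n * 1"
    by (intro mult_strict_left_mono) auto
  then have xn: "x < real n" unfolding x_def n_def by simp
  have fl: "real j = of_int \<lfloor>x\<rfloor>" unfolding j_def using x0 by simp
  show "real j \<le> x" "x < real j + 1" unfolding fl by linarith+
  then show "j < n" using xn by linarith
  show "attach phi w c z = (if snd (p!j) then RE (w @ take j p) (fst (p!j)) (x - real j)
        else RE (w @ take j p @ [p!j]) (fst (p!j)) (1 - (x - real j)))"
    using assms(5) unfolding attach_def Let_def p_def n_def x_def j_def by simp
qed

lemma set_lift: "set (lift r) = (\<lambda>(a, b). (A a, b)) ` set r"
  by (simp add: lift_def)

lemma set_winv: "set (winv w) = linv ` set w"
  by (simp add: winv_def)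

lemma bword_valid:
  assumes "\<forall>r \<in> Rs. set r \<subseteq> Ag \<times> UNIV" "\<forall>a \<in> Ag. set (phi a) \<subseteq> Ag \<times> UNIV" "c \<in> cells Ag Rs"
  shows "set (bword phi c) \<subseteq> gens Ag \<times> UNIV"
  using assms unfolding cells_def gens_def
  apply (auto simp: set_lift set_winv linv_def)
  apply blast+
  done

lemma Fv_attach:
  fixes phi :: "'a \<Rightarrow> ('a \<times> bool) list" and c :: "'a cell" and z :: complex and w :: "'a gword"
    and Ag :: "'a set" and Rs
  fixes p n x j
  defines "p \<equiv> bword phi c" and "n \<equiv> length (bword phi c)"
    and "x \<equiv> real (length (bword phi c)) * (Arg2pi z / (2*pi))" and "j \<equiv> nat \<lfloor>x\<rfloor>"
  assumes val: "set (bword phi c) \<subseteq> gens Ag \<times> UNIV"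
  shows "Fv Ag Rs phi (attach phi w c z) = (if n = 0 then {cl Ag Rs phi w}
     else if x = real j then {cl Ag Rs phi (w @ take j p)}
     else {cl Ag Rs phi (w @ take j p), cl Ag Rs phi (w @ take (Suc j) p)})"
proof (cases "n = 0")
  case True
  then show ?thesis unfolding attach_def Fv_def n_def by simp
next
  case False
  then have n0: "n > 0" by simp
  note ae = attach_eq(1-3)[where phi=phi and c=c and z=z, folded p_def n_def x_def j_def, OF n0]
    attach_eq(4)[where phi=phi and c=c and z=z and w=w, folded p_def n_def x_def j_def, OF n0]
  have jn: "j < length p" using ae(1) unfolding p_def n_def by simp
  have tk: "take (Suc j) p = take j p @ [p ! j]" using jn by (simp add: take_Suc_conv_app_nth)
  have pj: "p ! j \<in> gens Ag \<times> UNIV" using val jn unfolding p_def by (meson nth_mem subsetD)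
  show ?thesis
  proof (cases "snd (p!j)")
    case True
    obtain y where e: "p ! j = (y, True)" using True by (cases "p ! j") auto
    have "w @ take j p @ [(y, True)] = w @ take (Suc j) p" using tk e by simp
    then show ?thesis using ae False unfolding Fv_def by (auto simp: e)
  next
    case False': False
    obtain y where e: "p ! j = (y, False)" using False' by (cases "p ! j") auto
    have li: "linv (p ! j) = (y, True)" using e unfolding linv_def by simp
    have "weq Ag Rs phi ((w @ take j p) @ [p ! j, linv (p ! j)] @ []) ((w @ take j p) @ [])"
      using pj by (rule weq_cancel)
    then have c1: "cl Ag Rs phi (w @ take j p @ [p ! j] @ [(y, True)]) = cl Ag Rs phi (w @ take j p)"
      using li by (metis append.assoc append_Cons append_Nil append_Nil2 cl_eq)
    have c2: "w @ take j p @ [p ! j] = w @ take (Suc j) p" using tk by simp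
    have att: "attach phi w c z = RE (w @ take j p @ [(y,False)]) y (1 - (x - real j))"
      using ae(4) e by simp
    have ne0: "1 - (x - real j) \<noteq> 0" using ae by linarith
    have c1': "cl Ag Rs phi (w @ take j p @ [(y, False)] @ [(y, True)]) = cl Ag Rs phi (w @ take j p)"
      using c1 e by simp
    have c2': "w @ take j p @ [(y, False)] = w @ take (Suc j) p" using c2 e by simp
    show ?thesis
    proof (cases "x = real j")
      case True
      then show ?thesis using att ne0 c1' False unfolding Fv_def by simp
    next
      case False2: False
      then have "1 - (x - real j) \<noteq> 1" by simp
      have att': "attach phi w c z = RE (w @ take (Suc j) p) y (1 - (x - real j))"
        using att c2' by simp
      have c3: "cl Ag Rs phi (w @ take (Suc j) p @ [(y, True)]) = cl Ag Rs phi (w @ take j p)"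
        using c1' c2' by (metis append_assoc)
      show ?thesis using ne0 False False2 \<open>1 - (x - real j) \<noteq> 1\<close>
        unfolding Fv_def att' by (simp add: c3 insert_commute)
    qed
  qed
qed

lemma FF_attach: "FF Ag Rs phi (attach phi w c z) = Fv Ag Rs phi (attach phi w c z)"
  by (auto simp: attach_def Let_def FF_def)

lemma Fv_attach_weq:
  assumes val: "set (bword phi c) \<subseteq> gens Ag \<times> UNIV" and "weq Ag Rs phi w w'"
  shows "Fv Ag Rs phi (attach phi w c z) = Fv Ag Rs phi (attach phi w' c z)"
proof -
  have "\<And>X. cl Ag Rs phi (w @ X) = cl Ag Rs phi (w' @ X)" using assms(2) by (intro cl_eq weq_app)
  moreover have "cl Ag Rs phi w = cl Ag Rs phi w'" using assms(2) by (rule cl_eq)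
  ultimately show ?thesis unfolding Fv_attach[OF val] Let_def by simp
qed

context
  fixes Ag :: "'a set" and Rs :: "('a \<times> bool) list set" and phi :: "'a \<Rightarrow> ('a \<times> bool) list"
  assumes RsA: "\<forall>r \<in> Rs. set r \<subseteq> Ag \<times> UNIV" and phiA: "\<forall>a \<in> Ag. set (phi a) \<subseteq> Ag \<times> UNIV"
begin

lemma bval: "c \<in> cells Ag Rs \<Longrightarrow> set (bword phi c) \<subseteq> gens Ag \<times> UNIV"
  using bword_valid[OF RsA phiA] by blast

lemma xgen_FF:
  assumes "(p, q) \<in> xgen Ag Rs phi"
  shows "FF Ag Rs phi p = FF Ag Rs phi q"
  using assms
proof cases
  case (1 w w')
  then show ?thesis by (simp add: FF_def Fv_def cl_eq)
next
  case (2 w w' x \<tau>)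
  have "cl Ag Rs phi w = cl Ag Rs phi w'" "cl Ag Rs phi (w @ [(x, True)]) = cl Ag Rs phi (w' @ [(x, True)])"
    using 2(5) by (rule cl_eq, intro cl_eq weq_app)
  then show ?thesis using 2 by (simp add: FF_def Fv_def)
next
  case (3 w w' c z)
  have e: "\<And>X. cl Ag Rs phi (w @ X) = cl Ag Rs phi (w' @ X)" using 3 by (intro cl_eq weq_app)
  show ?thesis using 3 Fv_attach_weq[OF bval[OF 3(6)] 3(5), of z] by (simp add: FF_def e)
next
  case (4 w x)
  then show ?thesis by (simp add: FF_def Fv_def)
next
  case (5 w x)
  then show ?thesis by (simp add: FF_def Fv_def)
next
  case (6 w c z)
  then show ?thesis by (simp add: FF_def FF_attach[unfolded FF_def])
qed

lemma xeq_FF: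
  assumes "(p, q) \<in> xeq Ag Rs phi"
  shows "FF Ag Rs phi p = FF Ag Rs phi q"
  using assms unfolding xeq_def
proof (induction rule: rtrancl_induct)
  case base
  then show ?case by simp
next
  case (step y z)
  then show ?case using xgen_FF by auto
qed

lemma attach_raw:
  assumes "valid_word Ag w" "c \<in> cells Ag Rs"
  shows "attach phi w c z \<in> rawpts Ag Rs"
proof (cases "bword phi c = []")
  case True
  then show ?thesis using assms by (simp add: attach_def rawpts_def)
next
  case False
  define p where "p = bword phi c"
  define x where "x = real (length (bword phi c)) * (Arg2pi z / (2*pi))"
  define j where "j = nat \<lfloor>x\<rfloor>"
  have n0: "length (bword phi c) > 0" using False by simp
  note ae = attach_eq(1-3)[where phi=phi and c=c and z=z, OF n0, folded p_def x_def j_def]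
    attach_eq(4)[where phi=phi and c=c and z=z and w=w, OF n0, folded p_def x_def j_def]
  have v: "set p \<subseteq> gens Ag \<times> UNIV" using bval[OF assms(2)] p_def by simp
  have jn: "j < length p" using ae(1) p_def by simp
  have pj: "p ! j \<in> gens Ag \<times> UNIV" using v jn by (meson nth_mem subsetD)
  have tk: "set (take j p) \<subseteq> gens Ag \<times> UNIV" using v by (meson set_take_subset subset_trans)
  have vw: "valid_word Ag (w @ take j p)" "valid_word Ag (w @ take j p @ [p ! j])"
    using assms(1) tk pj by (auto simp: valid_word_def)
  have "fst (p ! j) \<in> gens Ag" using pj by auto
  then show ?thesis using ae(2,3) ae(4) vw unfolding rawpts_def by auto
qed

lemma xgen_raw:
  assumes "(p, q) \<in> xgen Ag Rs phi"
  shows "p \<in> rawpts Ag Rs \<and> q \<in> rawpts Ag Rs"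
  using assms
proof cases
  case (5 w x)
  then have "valid_word Ag (w @ [(x, True)])" by (auto simp: valid_word_def)
  then show ?thesis using 5 by (auto simp: rawpts_def)
next
  case (6 w c z)
  then show ?thesis using attach_raw[of w c z] by (auto simp: rawpts_def)
qed (auto simp: rawpts_def)

lemma xeq_raw:
  assumes "(p, q) \<in> xeq Ag Rs phi" "p \<in> rawpts Ag Rs"
  shows "q \<in> rawpts Ag Rs"
  using assms unfolding xeq_def
proof (induction rule: rtrancl_induct)
  case base
  then show ?case by simp
next
  case (step y z)
  then show ?case using xgen_raw by auto
qed

lemma Union_Xpts: "\<Union>(Xpts Ag Rs phi) \<subseteq> rawpts Ag Rs"
  unfolding Xpts_def quotient_def using xeq_raw by auto

end

lemma xeq_sym: "(p, q) \<in> xeq Ag Rs phi \<Longrightarrow> (q, p) \<in> xeq Ag Rs phi"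
  unfolding xeq_def by (metis sym_Un_converse sym_rtrancl symD)

lemma xeq_trans: "(p, q) \<in> xeq Ag Rs phi \<Longrightarrow> (q, r) \<in> xeq Ag Rs phi \<Longrightarrow> (p, r) \<in> xeq Ag Rs phi"
  unfolding xeq_def by (meson rtrancl_trans)

lemma cls_eq: "(p, q) \<in> xeq Ag Rs phi \<Longrightarrow> cls Ag Rs phi p = cls Ag Rs phi q"
  unfolding cls_def using xeq_sym xeq_trans by blast

lemma xeq_refl: "(p, p) \<in> xeq Ag Rs phi"
  unfolding xeq_def by simp


lemma istop_raw: "istopology (\<lambda>U. U \<subseteq> rawpts Ag Rs
     \<and> (\<forall>w x. openin (top_of_set {0..1::real}) {\<tau> \<in> {0..1}. RE w x \<tau> \<in> U})
     \<and> (\<forall>w c. openin (top_of_set (cball (0::complex) 1)) {z \<in> cball 0 1. RC w c z \<in> U}))"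
  unfolding istopology_def
proof (intro conjI allI impI)
  fix S T :: "'a raw set"
  assume S: "S \<subseteq> rawpts Ag Rs \<and> (\<forall>w x. openin (top_of_set {0..1::real}) {\<tau> \<in> {0..1}. RE w x \<tau> \<in> S})
     \<and> (\<forall>w c. openin (top_of_set (cball (0::complex) 1)) {z \<in> cball 0 1. RC w c z \<in> S})"
    and T: "T \<subseteq> rawpts Ag Rs \<and> (\<forall>w x. openin (top_of_set {0..1::real}) {\<tau> \<in> {0..1}. RE w x \<tau> \<in> T})
     \<and> (\<forall>w c. openin (top_of_set (cball (0::complex) 1)) {z \<in> cball 0 1. RC w c z \<in> T})"
  show "S \<inter> T \<subseteq> rawpts Ag Rs" using S by blast
  fix w x
  have "{\<tau> \<in> {0..1}. RE w x \<tau> \<in> S \<inter> T} = {\<tau> \<in> {0..1}. RE w x \<tau> \<in> S} \<inter> {\<tau> \<in> {0..1}. RE w x \<tau> \<in> T}"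
    by blast
  then show "openin (top_of_set {0..1::real}) {\<tau> \<in> {0..1}. RE w x \<tau> \<in> S \<inter> T}" using S T by auto
next
  fix S T :: "'a raw set"
  assume S: "S \<subseteq> rawpts Ag Rs \<and> (\<forall>w x. openin (top_of_set {0..1::real}) {\<tau> \<in> {0..1}. RE w x \<tau> \<in> S})
     \<and> (\<forall>w c. openin (top_of_set (cball (0::complex) 1)) {z \<in> cball 0 1. RC w c z \<in> S})"
    and T: "T \<subseteq> rawpts Ag Rs \<and> (\<forall>w x. openin (top_of_set {0..1::real}) {\<tau> \<in> {0..1}. RE w x \<tau> \<in> T})
     \<and> (\<forall>w c. openin (top_of_set (cball (0::complex) 1)) {z \<in> cball 0 1. RC w c z \<in> T})"
  fix w c
  have "{z \<in> cball 0 1. RC w c z \<in> S \<inter> T} = {z \<in> cball 0 1. RC w c z \<in> S} \<inter> {z \<in> cball 0 1. RC w c z \<in> T}"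
    by blast
  then show "openin (top_of_set (cball (0::complex) 1)) {z \<in> cball 0 1. RC w c z \<in> S \<inter> T}" using S T by auto
next
  fix K :: "'a raw set set"
  assume K: "\<forall>S\<in>K. S \<subseteq> rawpts Ag Rs \<and> (\<forall>w x. openin (top_of_set {0..1::real}) {\<tau> \<in> {0..1}. RE w x \<tau> \<in> S})
     \<and> (\<forall>w c. openin (top_of_set (cball (0::complex) 1)) {z \<in> cball 0 1. RC w c z \<in> S})"
  show "\<Union>K \<subseteq> rawpts Ag Rs" using K by blast
  fix w x
  have "{\<tau> \<in> {0..1}. RE w x \<tau> \<in> \<Union>K} = \<Union>((\<lambda>S. {\<tau> \<in> {0..1}. RE w x \<tau> \<in> S}) ` K)" by blast
  then show "openin (top_of_set {0..1::real}) {\<tau> \<in> {0..1}. RE w x \<tau> \<in> \<Union>K}" using K by auto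
next
  fix K :: "'a raw set set"
  assume K: "\<forall>S\<in>K. S \<subseteq> rawpts Ag Rs \<and> (\<forall>w x. openin (top_of_set {0..1::real}) {\<tau> \<in> {0..1}. RE w x \<tau> \<in> S})
     \<and> (\<forall>w c. openin (top_of_set (cball (0::complex) 1)) {z \<in> cball 0 1. RC w c z \<in> S})"
  fix w c
  have "{z \<in> cball 0 1. RC w c z \<in> \<Union>K} = \<Union>((\<lambda>S. {z \<in> cball 0 1. RC w c z \<in> S}) ` K)" by blast
  then show "openin (top_of_set (cball (0::complex) 1)) {z \<in> cball 0 1. RC w c z \<in> \<Union>K}" using K by auto
qed

lemma openin_rawtop: "openin (rawtop Ag Rs) U \<longleftrightarrow> U \<subseteq> rawpts Ag Rs
     \<and> (\<forall>w x. openin (top_of_set {0..1::real}) {\<tau> \<in> {0..1}. RE w x \<tau> \<in> U})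
     \<and> (\<forall>w c. openin (top_of_set (cball (0::complex) 1)) {z \<in> cball 0 1. RC w c z \<in> U})"
  unfolding rawtop_def by (simp only: topology_inverse'[OF istop_raw])

lemma Xpts_disj:
  assumes "q1 \<in> Xpts Ag Rs phi" "q2 \<in> Xpts Ag Rs phi" "p \<in> q1" "p \<in> q2"
  shows "q1 = q2"
proof -
  obtain r1 where r1: "q1 = xeq Ag Rs phi `` {r1}" using assms(1) unfolding Xpts_def quotient_def by blast
  obtain r2 where r2: "q2 = xeq Ag Rs phi `` {r2}" using assms(2) unfolding Xpts_def quotient_def by blast
  have "(r1, p) \<in> xeq Ag Rs phi" "(r2, p) \<in> xeq Ag Rs phi" using assms r1 r2 by auto
  then have "(r1, r2) \<in> xeq Ag Rs phi" using xeq_sym xeq_trans by metis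
  then show ?thesis using r1 r2 cls_eq[unfolded cls_def] by metis
qed

lemma istop_cay: "istopology (\<lambda>U. U \<subseteq> Xpts Ag Rs phi \<and> openin (rawtop Ag Rs) (\<Union>U))"
  unfolding istopology_def
proof (intro conjI allI impI)
  fix S T
  assume S: "S \<subseteq> Xpts Ag Rs phi \<and> openin (rawtop Ag Rs) (\<Union>S)"
    and T: "T \<subseteq> Xpts Ag Rs phi \<and> openin (rawtop Ag Rs) (\<Union>T)"
  have "\<Union> S \<inter> \<Union> T \<subseteq> \<Union> (S \<inter> T)"
  proof
    fix p assume "p \<in> \<Union> S \<inter> \<Union> T"
    then obtain q1 q2 where "q1 \<in> S" "q2 \<in> T" "p \<in> q1" "p \<in> q2" by blast
    then show "p \<in> \<Union> (S \<inter> T)" using Xpts_disj[of q1 Ag Rs phi q2 p] S T by blast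
  qed
  then have "\<Union>(S \<inter> T) = \<Union>S \<inter> \<Union>T" by blast
  then show "openin (rawtop Ag Rs) (\<Union>(S \<inter> T))" using S T by auto
next
  fix S T :: "'a raw set set"
  assume S: "S \<subseteq> Xpts Ag Rs phi \<and> openin (rawtop Ag Rs) (\<Union>S)"
  then show "S \<inter> T \<subseteq> Xpts Ag Rs phi" by blast
next
  fix K :: "'a raw set set set"
  assume K: "\<forall>S\<in>K. S \<subseteq> Xpts Ag Rs phi \<and> openin (rawtop Ag Rs) (\<Union>S)"
  have "\<Union>(\<Union>K) = \<Union>(Union ` K)" by blast
  then show "openin (rawtop Ag Rs) (\<Union>(\<Union>K))" using K by auto
next
  fix K :: "'a raw set set set"
  assume K: "\<forall>S\<in>K. S \<subseteq> Xpts Ag Rs phi \<and> openin (rawtop Ag Rs) (\<Union>S)"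
  then show "\<Union>K \<subseteq> Xpts Ag Rs phi" by blast
qed

lemma openin_cay: "openin (cayley_complex Ag Rs phi) U \<longleftrightarrow> U \<subseteq> Xpts Ag Rs phi \<and> openin (rawtop Ag Rs) (\<Union>U)"
  unfolding cayley_complex_def by (simp only: topology_inverse'[OF istop_cay])

lemma arg_near:
  assumes "z \<notin> \<real>\<^sub>\<ge>\<^sub>0" "e > 0"
  shows "\<exists>d>0. \<forall>z'. dist z' z < d \<longrightarrow> \<bar>Arg2pi z' - Arg2pi z\<bar> < e"
proof -
  obtain d where d: "d > 0" "Arg2pi ` ball z d \<subseteq> ball (Arg2pi z) e"
    using continuous_at_Arg2pi[OF assms(1)] assms(2) unfolding continuous_at_ball by blast
  show ?thesis
  proof (intro exI[of _ d] conjI allI impI)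
    fix z' assume "dist z' z < d"
    then have "z' \<in> ball z d" by (simp add: dist_commute)
    then have "Arg2pi z' \<in> ball (Arg2pi z) e" using d by blast
    then show "\<bar>Arg2pi z' - Arg2pi z\<bar> < e" by (simp add: dist_real_def abs_minus_commute)
  qed (use d in auto)
qed


lemma Fv_attach_sub:
  assumes val: "set (bword phi c) \<subseteq> gens Ag \<times> UNIV"
  shows "Fv Ag Rs phi (attach phi w c z) \<subseteq> {cl Ag Rs phi (w @ take j (bword phi c)) | j. j \<le> length (bword phi c)}"
proof (cases "length (bword phi c) = 0")
  case True
  then show ?thesis unfolding Fv_attach[OF val] by force
next
  case False
  then have n0: "length (bword phi c) > 0" by simp
  define j where "j = nat \<lfloor>real (length (bword phi c)) * (Arg2pi z / (2 * pi))\<rfloor>"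
  have j: "j < length (bword phi c)" using attach_eq(1)[where phi=phi and c=c and z=z, OF n0] j_def by simp
  have a: "cl Ag Rs phi (w @ take j (bword phi c)) \<in> {cl Ag Rs phi (w @ take j (bword phi c)) | j. j \<le> length (bword phi c)}"
    using j by auto
  have b: "cl Ag Rs phi (w @ take (Suc j) (bword phi c)) \<in> {cl Ag Rs phi (w @ take j (bword phi c)) | j. j \<le> length (bword phi c)}"
    using j by (intro CollectI exI[of _ "Suc j"]) auto
  show ?thesis unfolding Fv_attach[OF val] Let_def j_def[symmetric] using False a b by auto
qed

lemma Fv_attach_mem:
  assumes val: "set (bword phi c) \<subseteq> gens Ag \<times> UNIV" and n0: "length (bword phi c) > 0"
  shows "g \<in> Fv Ag Rs phi (attach phi w c z) \<longleftrightarrow>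
    (\<exists>i \<le> length (bword phi c). cl Ag Rs phi (w @ take i (bword phi c)) = g
      \<and> real i - 1 < real (length (bword phi c)) * (Arg2pi z / (2*pi))
      \<and> real (length (bword phi c)) * (Arg2pi z / (2*pi)) < real i + 1)"
proof -
  define p where "p = bword phi c"
  define n where "n = length (bword phi c)"
  define x where "x = real (length (bword phi c)) * (Arg2pi z / (2*pi))"
  define j where "j = nat \<lfloor>x\<rfloor>"
  note ae = attach_eq(1-3)[where phi=phi and c=c and z=z, OF n0, folded p_def n_def x_def j_def]
  have F: "Fv Ag Rs phi (attach phi w c z) = (if x = real j then {cl Ag Rs phi (w @ take j p)}
     else {cl Ag Rs phi (w @ take j p), cl Ag Rs phi (w @ take (Suc j) p)})"
    using Fv_attach[OF val, of Rs w z] n0 unfolding Let_def p_def n_def x_def j_def by simp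
  have main: "g \<in> Fv Ag Rs phi (attach phi w c z) \<longleftrightarrow> (\<exists>i\<le>n. cl Ag Rs phi (w @ take i p) = g \<and> real i - 1 < x \<and> x < real i + 1)"
    unfolding F
  proof
    assume g: "g \<in> (if x = real j then {cl Ag Rs phi (w @ take j p)}
     else {cl Ag Rs phi (w @ take j p), cl Ag Rs phi (w @ take (Suc j) p)})"
    show "\<exists>i\<le>n. cl Ag Rs phi (w @ take i p) = g \<and> real i - 1 < x \<and> x < real i + 1"
    proof (cases "x = real j")
      case True
      then show ?thesis using g ae by (intro exI[of _ j]) auto
    next
      case False
      then have "g = cl Ag Rs phi (w @ take j p) \<or> g = cl Ag Rs phi (w @ take (Suc j) p)" using g by auto
      then show ?thesis
      proof
        assume "g = cl Ag Rs phi (w @ take j p)"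
        then show ?thesis using ae by (intro exI[of _ j]) auto
      next
        assume "g = cl Ag Rs phi (w @ take (Suc j) p)"
        then show ?thesis using ae False by (intro exI[of _ "Suc j"]) auto
      qed
    qed
  next
    assume "\<exists>i\<le>n. cl Ag Rs phi (w @ take i p) = g \<and> real i - 1 < x \<and> x < real i + 1"
    then obtain i where i: "i \<le> n" "cl Ag Rs phi (w @ take i p) = g" "real i - 1 < x" "x < real i + 1" by blast
    show "g \<in> (if x = real j then {cl Ag Rs phi (w @ take j p)}
     else {cl Ag Rs phi (w @ take j p), cl Ag Rs phi (w @ take (Suc j) p)})"
    proof (cases "x = real j")
      case True
      then have "real i < real j + 1" "real j < real i + 1" using i by linarith+
      then have "i = j" by linarith
      then have "g = cl Ag Rs phi (w @ take j p)" using i(2) by simp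
      then show ?thesis using True by simp
    next
      case False
      then have "real j < x" using ae by linarith
      then have "real i < real j + 2" "real j < real i + 1" using i ae by linarith+
      then have "i = j \<or> i = Suc j" by linarith
      then show ?thesis using False i by auto
    qed
  qed
  then show ?thesis unfolding p_def n_def x_def by simp
qed

lemma Arg2pi_xf:
  assumes "n > 0"
  shows "0 \<le> real n * (Arg2pi z / (2*pi))" "real n * (Arg2pi z / (2*pi)) < real n"
proof -
  have a0: "0 \<le> Arg2pi z" and a1: "Arg2pi z < 2*pi" using Arg2pi by auto
  show "0 \<le> real n * (Arg2pi z / (2*pi))" using a0 by simp
  have "Arg2pi z / (2*pi) < 1" using a1 by simp
  moreover have "real n > 0" using assms by simp
  ultimately have "real n * (Arg2pi z / (2*pi)) < real n * 1"
    by (intro mult_strict_left_mono) auto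
  then show "real n * (Arg2pi z / (2*pi)) < real n" by simp
qed


lemma rawpts_simps[simp]:
  "RV w \<in> rawpts Ag Rs \<longleftrightarrow> valid_word Ag w"
  "RE w x \<tau> \<in> rawpts Ag Rs \<longleftrightarrow> valid_word Ag w \<and> x \<in> gens Ag \<and> \<tau> \<in> {0..1}"
  "RC w c z \<in> rawpts Ag Rs \<longleftrightarrow> valid_word Ag w \<and> c \<in> cells Ag Rs \<and> z \<in> cball 0 1"
  by (auto simp: rawpts_def)

context
  fixes Ag :: "'a set" and Rs :: "('a \<times> bool) list set" and phi :: "'a \<Rightarrow> ('a \<times> bool) list"
  assumes RsA: "\<forall>r \<in> Rs. set r \<subseteq> Ag \<times> UNIV" and phiA: "\<forall>a \<in> Ag. set (phi a) \<subseteq> Ag \<times> UNIV"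
begin

lemma bval': "c \<in> cells Ag Rs \<Longrightarrow> set (bword phi c) \<subseteq> gens Ag \<times> UNIV"
  using bword_valid[OF RsA phiA] by blast

lemma circ_near:
  assumes c: "c \<in> cells Ag Rs" and z1: "cmod z = 1" and g: "g \<in> Fv Ag Rs phi (attach phi w c z)"
  shows "\<exists>e>0. \<forall>z'. cmod z' = 1 \<and> dist z' z < e \<longrightarrow> g \<in> Fv Ag Rs phi (attach phi w c z')"
proof (cases "length (bword phi c) = 0")
  case True
  then show ?thesis using g unfolding Fv_attach[OF bval'[OF c]] by (intro exI[of _ 1]) auto
next
  case False
  define n where "n = length (bword phi c)"
  define p where "p = bword phi c"
  define xf where "xf y = real n * (Arg2pi y / (2*pi))" for y
  have n0: "n > 0" using False n_def by simp
  have mem: "g \<in> Fv Ag Rs phi (attach phi w c y) \<longleftrightarrow>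
    (\<exists>i \<le> n. cl Ag Rs phi (w @ take i p) = g \<and> real i - 1 < xf y \<and> xf y < real i + 1)" for y
    using Fv_attach_mem[OF bval'[OF c], where w=w and z=y and g=g and Rs=Rs] n0 unfolding n_def p_def xf_def by simp
  have xb: "0 \<le> xf y" "xf y < real n" for y using Arg2pi_xf[OF n0, of y] unfolding xf_def by auto
  obtain i where i: "i \<le> n" "cl Ag Rs phi (w @ take i p) = g" "real i - 1 < xf z" "xf z < real i + 1"
    using g mem by blast
  show ?thesis
  proof (cases "z \<in> \<real>\<^sub>\<ge>\<^sub>0")
    case False
    define \<delta> where "\<delta> = min (xf z - (real i - 1)) (real i + 1 - xf z)"
    have d0: "\<delta> > 0" using i unfolding \<delta>_def by simp
    have "\<delta> * (2*pi) / real n > 0" using d0 n0 by simp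
    then obtain d where d: "d > 0" "\<And>z'. dist z' z < d \<Longrightarrow> \<bar>Arg2pi z' - Arg2pi z\<bar> < \<delta> * (2*pi) / real n"
      using arg_near[OF False] by blast
    show ?thesis
    proof (intro exI[of _ d] conjI allI impI)
      fix z' assume "cmod z' = 1 \<and> dist z' z < d"
      then have a: "\<bar>Arg2pi z' - Arg2pi z\<bar> < \<delta> * (2*pi) / real n" using d by blast
      have "xf z' - xf z = real n / (2*pi) * (Arg2pi z' - Arg2pi z)" unfolding xf_def by (simp add: field_simps)
      then have "\<bar>xf z' - xf z\<bar> = real n / (2*pi) * \<bar>Arg2pi z' - Arg2pi z\<bar>" by (simp add: abs_mult)
      also have "\<dots> < real n / (2*pi) * (\<delta> * (2*pi) / real n)"
        using a n0 by (intro mult_strict_left_mono) auto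
      also have "\<dots> = \<delta>" using n0 by simp
      finally have "\<bar>xf z' - xf z\<bar> < \<delta>" .
      then have "real i - 1 < xf z'" "xf z' < real i + 1" unfolding \<delta>_def by auto
      then show "g \<in> Fv Ag Rs phi (attach phi w c z')" using mem i by blast
    qed (use d in auto)
  next
    case True
    have z0: "z \<noteq> 0" using z1 by auto
    have Re1: "Re z = 1" using nonneg_Reals_cmod_eq_Re[OF True] z1 by simp
    have A0: "Arg2pi z = 0" using True by (simp add: Arg2pi_eq_0 complex_nonneg_Reals_iff complex_is_Real_iff)
    have "xf z = 0" unfolding xf_def A0 by simp
    then have "i = 0" using i by linarith
    then have g0: "g = cl Ag Rs phi w" using i by simp
    have "weq Ag Rs phi (w @ bword phi c @ []) (w @ [])" using c by (rule weq_rel)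
    then have gn: "cl Ag Rs phi (w @ take n p) = g" using g0 cl_eq unfolding n_def p_def by fastforce
    have nz: "- z \<notin> \<real>\<^sub>\<ge>\<^sub>0" using Re1 by (simp add: complex_nonneg_Reals_iff)
    have Am: "Arg2pi (- z) = pi" using Arg2pi_minus[OF z0] A0 by simp
    have "2*pi / real n > 0" using n0 by simp
    then obtain d where d: "d > 0" "\<And>y. dist y (- z) < d \<Longrightarrow> \<bar>Arg2pi y - Arg2pi (- z)\<bar> < 2*pi / real n"
      using arg_near[OF nz] by blast
    show ?thesis
    proof (intro exI[of _ d] conjI allI impI)
      fix z' assume z': "cmod z' = 1 \<and> dist z' z < d"
      then have "dist (- z') (- z) < d" by (simp add: dist_minus)
      then have a: "\<bar>Arg2pi (- z') - pi\<bar> < 2*pi / real n" using d Am by auto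
      have z'0: "z' \<noteq> 0" using z' by auto
      have a0: "0 \<le> Arg2pi z'" and a1: "Arg2pi z' < 2*pi" using Arg2pi by auto
      show "g \<in> Fv Ag Rs phi (attach phi w c z')"
      proof (cases "Arg2pi z' < pi")
        case True
        then have "Arg2pi z' < 2*pi / real n" using a Arg2pi_minus[OF z'0] by auto
        then have "real n * Arg2pi z' < 2*pi" using n0 by (simp add: field_simps)
        then have "xf z' < 1" unfolding xf_def using pi_gt_zero by (simp add: field_simps)
        then show ?thesis using mem[of z'] i xb[of z'] \<open>i = 0\<close> by auto
      next
        case False
        then have "Arg2pi z' - pi > pi - 2*pi / real n" using a Arg2pi_minus[OF z'0] by auto
        then have "Arg2pi z' > 2*pi - 2*pi / real n" by simp
        then have "real n * Arg2pi z' > real n * (2*pi - 2*pi / real n)" using n0 by simp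
        then have "real n * Arg2pi z' > 2*pi * real n - 2*pi" using n0 by (simp add: algebra_simps)
        then have "xf z' > real n - 1" unfolding xf_def using pi_gt_zero by (simp add: field_simps)
        then have "\<exists>i\<le>n. cl Ag Rs phi (w @ take i p) = g \<and> real i - 1 < xf z' \<and> xf z' < real i + 1"
          using gn xb[of z'] by (intro exI[of _ n]) auto
        then show ?thesis using mem[of z'] by blast
      qed
    qed (use d in auto)
  qed
qed


lemma cell_open:
  assumes c: "c \<in> cells Ag Rs"
  shows "openin (top_of_set (cball (0::complex) 1)) {z \<in> cball 0 1. g \<in> FF Ag Rs phi (RC w c z)}"
  unfolding openin_euclidean_subtopology_iff
proof (intro conjI ballI)
  show "{z \<in> cball 0 1. g \<in> FF Ag Rs phi (RC w c z)} \<subseteq> cball 0 1" by blast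
next
  fix z assume z: "z \<in> {z \<in> cball 0 1. g \<in> FF Ag Rs phi (RC w c z)}"
  define V where "V = {cl Ag Rs phi (w @ take j (bword phi c)) | j. j \<le> length (bword phi c)}"
  have FFi: "cmod y \<noteq> 1 \<Longrightarrow> FF Ag Rs phi (RC w c y) = V" for y unfolding FF_def V_def by simp
  have FFb: "cmod y = 1 \<Longrightarrow> FF Ag Rs phi (RC w c y) = Fv Ag Rs phi (attach phi w c y)" for y
    unfolding FF_def by simp
  have gV: "g \<in> V"
  proof (cases "cmod z = 1")
    case True
    then show ?thesis using z FFb Fv_attach_sub[OF bval'[OF c], of Rs w z] unfolding V_def by auto
  next
    case False
    then show ?thesis using z FFi by auto
  qed
  have zc: "cmod z \<le> 1" using z by auto
  show "\<exists>e>0. \<forall>x'\<in>cball 0 1. dist x' z < e \<longrightarrow> x' \<in> {z \<in> cball 0 1. g \<in> FF Ag Rs phi (RC w c z)}"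
  proof (cases "cmod z = 1")
    case False
    then have lt: "cmod z < 1" using zc by simp
    show ?thesis
    proof (intro exI[of _ "1 - cmod z"] conjI ballI impI)
      fix x' :: complex assume x': "x' \<in> cball 0 1" "dist x' z < 1 - cmod z"
      have "cmod x' \<le> cmod z + cmod (x' - z)" using norm_triangle_ineq[of z "x' - z"] by simp
      then have "cmod x' < 1" using x' by (simp add: dist_norm)
      then show "x' \<in> {z \<in> cball 0 1. g \<in> FF Ag Rs phi (RC w c z)}" using x' FFi gV by auto
    qed (use lt in simp)
  next
    case True
    then obtain e where e: "e > 0" "\<And>z'. cmod z' = 1 \<and> dist z' z < e \<Longrightarrow> g \<in> Fv Ag Rs phi (attach phi w c z')"
      using circ_near[OF c True] z FFb by blast
    show ?thesis
    proof (intro exI[of _ e] conjI ballI impI)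
      fix x' :: complex assume x': "x' \<in> cball 0 1" "dist x' z < e"
      show "x' \<in> {z \<in> cball 0 1. g \<in> FF Ag Rs phi (RC w c z)}"
      proof (cases "cmod x' = 1")
        case True
        then show ?thesis using x' e FFb by auto
      next
        case False
        then show ?thesis using x' FFi gV by auto
      qed
    qed (use e in simp)
  qed
qed

lemma raw_open: "openin (rawtop Ag Rs) {p \<in> rawpts Ag Rs. g \<in> FF Ag Rs phi p}"
  unfolding openin_rawtop
proof (intro conjI allI)
  show "{p \<in> rawpts Ag Rs. g \<in> FF Ag Rs phi p} \<subseteq> rawpts Ag Rs" by blast
next
  fix w x
  show "openin (top_of_set {0..1::real}) {\<tau> \<in> {0..1}. RE w x \<tau> \<in> {p \<in> rawpts Ag Rs. g \<in> FF Ag Rs phi p}}"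
  proof (cases "valid_word Ag w \<and> x \<in> gens Ag")
    case True
    define T where "T = (if g = cl Ag Rs phi w then {..<1} else {}) \<union>
       (if g = cl Ag Rs phi (w @ [(x, True)]) then {0<..} else ({}::real set))"
    have oT: "open T" unfolding T_def by auto
    have eq: "{\<tau> \<in> {0..1}. RE w x \<tau> \<in> {p \<in> rawpts Ag Rs. g \<in> FF Ag Rs phi p}} = {0..1} \<inter> T"
      using True unfolding T_def by (auto simp: FF_def Fv_def)
    show ?thesis unfolding eq using oT by (rule openin_open_Int)
  next
    case False
    then have eq: "{\<tau> \<in> {0..1}. RE w x \<tau> \<in> {p \<in> rawpts Ag Rs. g \<in> FF Ag Rs phi p}} = {}" by auto
    show ?thesis unfolding eq by (rule openin_empty)
  qed
next
  fix w c
  show "openin (top_of_set (cball (0::complex) 1)) {z \<in> cball 0 1. RC w c z \<in> {p \<in> rawpts Ag Rs. g \<in> FF Ag Rs phi p}}"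
  proof (cases "valid_word Ag w \<and> c \<in> cells Ag Rs")
    case True
    then have "{z \<in> cball 0 1. RC w c z \<in> {p \<in> rawpts Ag Rs. g \<in> FF Ag Rs phi p}} = {z \<in> cball 0 1. g \<in> FF Ag Rs phi (RC w c z)}"
      by auto
    then show ?thesis using cell_open True by simp
  next
    case False
    then have eq: "{z \<in> cball 0 1. RC w c z \<in> {p \<in> rawpts Ag Rs. g \<in> FF Ag Rs phi p}} = {}" by auto
    show ?thesis unfolding eq by (rule openin_empty)
  qed
qed


lemma red_step_set: "set (red_step l r) \<subseteq> insert l (set r)"
  by (cases r) auto

lemma reduce_set: "set (reduce w) \<subseteq> set w"
  unfolding reduce_def
proof (induction w)
  case Nil
  then show ?case by simp
next
  case (Cons l w)
  then show ?case using red_step_set[of l "foldr red_step w []"] by auto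
qed

lemma phipow_set: "a \<in> Ag \<Longrightarrow> set (phipow phi k a) \<subseteq> Ag \<times> UNIV"
proof (induction k)
  case 0
  then show ?case by simp
next
  case (Suc k)
  have "set (concat (map (phil phi) (phipow phi k a))) \<subseteq> Ag \<times> UNIV"
  proof
    fix y assume "y \<in> set (concat (map (phil phi) (phipow phi k a)))"
    then obtain l where l: "l \<in> set (phipow phi k a)" "y \<in> set (phil phi l)" by auto
    have "fst l \<in> Ag" using l(1) Suc by auto
    then show "y \<in> Ag \<times> UNIV" using l(2) phiA unfolding phil_def
      by (auto simp: set_winv linv_def split: if_splits; blast)
  qed
  then show ?case using reduce_set by (simp, blast)
qed

lemma FF_RC_sub:
  assumes c: "c \<in> cells Ag Rs"
  shows "FF Ag Rs phi (RC w c z) \<subseteq> {cl Ag Rs phi (w @ take j (bword phi c)) | j. j \<le> length (bword phi c)}"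
  using Fv_attach_sub[OF bval'[OF c], of Rs w z] unfolding FF_def by auto

lemma FF_ne: "\<exists>v. cl Ag Rs phi v \<in> FF Ag Rs phi p"
proof (cases p)
  case (RC w c z)
  show ?thesis
  proof (cases "cmod z = 1")
    case True
    then show ?thesis using RC by (auto simp: FF_def Fv_def attach_def Let_def)
  next
    case False
    then show ?thesis using RC by (auto simp: FF_def intro!: exI[of _ w] exI[of _ 0])
  qed
qed (auto simp: FF_def Fv_def)

end

definition Rset :: "('a \<Rightarrow> ('a \<times> bool) list) \<Rightarrow> 'a \<Rightarrow> nat \<Rightarrow> 'a gword set" where
  "Rset phi a k = {[], [(T, True)]} \<union>
     (\<Union>i\<in>{..<length (phipow phi k a)}. \<Union>ext\<in>{[], [(A (fst (phipow phi k a ! i)), False)]}.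
        (\<lambda>j. lift (take i (phipow phi k a)) @ ext @ take j (bword phi (RelC (fst (phipow phi k a ! i)))))
          ` {..length (bword phi (RelC (fst (phipow phi k a ! i))))})"

lemma Rset_finite: "finite (Rset phi a k)"
  unfolding Rset_def by auto

definition tcount :: "'a gword \<Rightarrow> nat" where
  "tcount w = length (filter (\<lambda>l. fst l = T) w)"

lemma tsum_take: "\<bar>tsum (take j xs)\<bar> \<le> int (tcount xs)"
proof (induction xs arbitrary: j)
  case Nil
  then show ?case by (simp add: tcount_def)
next
  case (Cons l xs)
  show ?case
  proof (cases j)
    case 0
    then show ?thesis by simp
  next
    case (Suc j')
    then show ?thesis using Cons[of j'] by (auto simp: tcount_def)
  qed
qed

lemma tcount_append[simp]: "tcount (u @ v) = tcount u + tcount v"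
  by (simp add: tcount_def)
lemma tcount_Cons[simp]: "tcount (l # v) = (if fst l = T then 1 else 0) + tcount v"
  by (simp add: tcount_def)
lemma tcount_Nil[simp]: "tcount [] = 0"
  by (simp add: tcount_def)

lemma tcount_lift[simp]: "tcount (lift r) = 0"
  by (induction r) (auto simp: lift_def)

lemma tcount_winv[simp]: "tcount (winv w) = tcount w"
  unfolding tcount_def winv_def by (simp add: rev_filter[symmetric] filter_map o_def linv_def)

lemma Rset_tsum: "r \<in> Rset phi a k \<Longrightarrow> \<bar>tsum r\<bar> \<le> 2"
proof -
  assume r: "r \<in> Rset phi a k"
  have "\<bar>tsum (take j (bword phi (RelC b)))\<bar> \<le> 2" for j b
    using tsum_take[of j "bword phi (RelC b)"] by simp
  then show ?thesis using r unfolding Rset_def by (auto simp: lift_def[symmetric])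
qed

lemma tsum_rep[simp]: "tsum (replicate k (T, True)) = int k"
  by (induction k) auto

lemma tsum_Aonly: "set u \<subseteq> A ` Ag \<times> UNIV \<Longrightarrow> tsum u = 0"
  by (induction u) auto


context
  fixes Ag :: "'a set" and Rs :: "('a \<times> bool) list set" and phi :: "'a \<Rightarrow> ('a \<times> bool) list"
  assumes RsA: "\<forall>r \<in> Rs. set r \<subseteq> Ag \<times> UNIV" and phiA: "\<forall>a \<in> Ag. set (phi a) \<subseteq> Ag \<times> UNIV"
begin

lemma Rset_valid:
  assumes a: "a \<in> Ag" and r: "r \<in> Rset phi a k"
  shows "set r \<subseteq> gens Ag \<times> UNIV"
proof -
  define P where "P = phipow phi k a"
  have PA: "set P \<subseteq> Ag \<times> UNIV" using phipow_set[OF RsA phiA a] P_def by simp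
  have c1: "set (lift (take i P)) \<subseteq> gens Ag \<times> UNIV" for i
  proof -
    have "set (take i P) \<subseteq> Ag \<times> UNIV" using PA by (meson set_take_subset subset_trans)
    then show ?thesis by (auto simp: set_lift gens_def)
  qed
  have bi: "fst (P ! i) \<in> Ag" if "i < length P" for i
  proof -
    have "P ! i \<in> Ag \<times> UNIV" using PA nth_mem[OF that] by blast
    then show ?thesis by (cases "P ! i") auto
  qed
  have c2: "set (take j (bword phi (RelC (fst (P ! i))))) \<subseteq> gens Ag \<times> UNIV" if "i < length P" for i j
  proof -
    have "RelC (fst (P ! i)) \<in> cells Ag Rs" using bi[OF that] unfolding cells_def by auto
    then show ?thesis using bval[OF RsA phiA] by (meson set_take_subset subset_trans)
  qed
  have c3: "(A (fst (P ! i)), False) \<in> gens Ag \<times> UNIV" if "i < length P" for i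
    using bi[OF that] by (auto simp: gens_def)
  have "r \<in> {[], [(T,True)]} \<or> (\<exists>i<length P. \<exists>ext \<in> {[], [(A (fst (P!i)), False)]}. \<exists>j.
      r = lift (take i P) @ ext @ take j (bword phi (RelC (fst (P!i)))))"
    using r unfolding Rset_def P_def[symmetric] by blast
  then show ?thesis
  proof
    assume "r \<in> {[], [(T,True)]}"
    then show ?thesis by (auto simp: gens_def)
  next
    assume "\<exists>i<length P. \<exists>ext \<in> {[], [(A (fst (P!i)), False)]}. \<exists>j.
      r = lift (take i P) @ ext @ take j (bword phi (RelC (fst (P!i))))"
    then obtain i ext j where i: "i < length P" and ext: "ext \<in> {[], [(A (fst (P!i)), False)]}"
      and rr: "r = lift (take i P) @ ext @ take j (bword phi (RelC (fst (P!i))))" by blast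
    have "set ext \<subseteq> gens Ag \<times> UNIV" using ext c3[OF i] by auto
    then show ?thesis unfolding rr using c1[of i] c2[OF i, of j] by auto
  qed
qed

end



context
  fixes Ag :: "'a set" and Rs :: "('a \<times> bool) list set" and phi :: "'a \<Rightarrow> ('a \<times> bool) list"
  assumes RsA: "\<forall>r \<in> Rs. set r \<subseteq> Ag \<times> UNIV" and phiA: "\<forall>a \<in> Ag. set (phi a) \<subseteq> Ag \<times> UNIV"
begin

lemma strip_point:
  assumes a: "a \<in> Ag" and q: "q \<in> strip Ag Rs phi u a k" and p: "p \<in> q" and g: "g \<in> FF Ag Rs phi p"
  shows "\<exists>r \<in> Rset phi a k. g = cl Ag Rs phi (u @ replicate k (T, True) @ r)"
proof -
  define P where "P = phipow phi k a"
  define base where "base = u @ replicate k (T, True)"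
  have FFc: "FF Ag Rs phi p = FF Ag Rs phi r0" if "p \<in> cls Ag Rs phi r0" for r0
    using that xeq_FF[OF RsA phiA, of r0 p] unfolding cls_def by auto
  show ?thesis
  proof (cases "P = []")
    case True
    then obtain \<tau> where qe: "q = cls Ag Rs phi (RE base T \<tau>)"
      using q unfolding strip_def Let_def P_def[symmetric] base_def[symmetric] by auto
    have "g \<in> Fv Ag Rs phi (RE base T \<tau>)" using g FFc[of "RE base T \<tau>"] p qe by (simp add: FF_def)
    moreover have "Fv Ag Rs phi (RE base T \<tau>) \<subseteq> {cl Ag Rs phi base, cl Ag Rs phi (base @ [(T, True)])}"
      by (simp add: Fv_def)
    ultimately have "g = cl Ag Rs phi base \<or> g = cl Ag Rs phi (base @ [(T, True)])" by blast
    then have "g = cl Ag Rs phi (u @ replicate k (T, True) @ []) \<or> g = cl Ag Rs phi (u @ replicate k (T, True) @ [(T, True)])"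
      unfolding base_def by simp
    moreover have "[] \<in> Rset phi a k" "[(T, True)] \<in> Rset phi a k" unfolding Rset_def by auto
    ultimately show ?thesis by blast
  next
    case False
    then obtain i where i: "i < length P"
      and qi: "q \<in> cellimg Ag Rs phi (base @ lift (take i P) @ (if snd (P ! i) then [] else [(A (fst (P ! i)), False)]))
                (RelC (fst (P ! i)))"
      using q unfolding strip_def Let_def P_def[symmetric] base_def[symmetric] by auto
    define ext where "ext = (if snd (P ! i) then [] else [(A (fst (P ! i)), False)])"
    define W where "W = base @ lift (take i P) @ ext"
    define c where "c = RelC (fst (P ! i))"
    obtain z where qz: "q = cls Ag Rs phi (RC W c z)" using qi unfolding cellimg_def W_def ext_def c_def by auto
    have PA: "set P \<subseteq> Ag \<times> UNIV" using phipow_set[OF RsA phiA a] P_def by simp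
    have "P ! i \<in> Ag \<times> UNIV" using PA nth_mem[OF i] by blast
    then have "fst (P ! i) \<in> Ag" by (cases "P ! i") auto
    then have cc: "c \<in> cells Ag Rs" unfolding c_def cells_def by auto
    have "g \<in> FF Ag Rs phi (RC W c z)" using g FFc p qz by auto
    then obtain j where j: "j \<le> length (bword phi c)" "g = cl Ag Rs phi (W @ take j (bword phi c))"
      using FF_RC_sub[OF RsA phiA cc, of W z] by auto
    define r where "r = lift (take i P) @ ext @ take j (bword phi c)"
    have "ext \<in> {[], [(A (fst (P ! i)), False)]}" unfolding ext_def by auto
    then have "r \<in> Rset phi a k" unfolding Rset_def r_def P_def[symmetric] c_def using i j(1)[unfolded c_def]
      by blast
    moreover have "g = cl Ag Rs phi (u @ replicate k (T, True) @ r)" using j(2) unfolding W_def r_def base_def by simp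
    ultimately show ?thesis by blast
  qed
qed

end


lemma subsingleton_finite: "(\<And>x y. x \<in> S \<Longrightarrow> y \<in> S \<Longrightarrow> x = y) \<Longrightarrow> finite S"
proof (cases "S = {}")
  case False
  assume h: "\<And>x y. x \<in> S \<Longrightarrow> y \<in> S \<Longrightarrow> x = y"
  obtain x where "x \<in> S" using False by blast
  then have "S \<subseteq> {x}" using h by blast
  then show ?thesis using finite_subset by blast
qed simp

theorem lemma3p2:
  fixes Ag :: "'a set" and Rs :: "('a \<times> bool) list set"
    and phi :: "'a \<Rightarrow> ('a \<times> bool) list" and C :: "'a raw set set"
  assumes "finite Ag"
    and "finite Rs" and "\<forall>r \<in> Rs. free_word Ag r"
    and "\<forall>a \<in> Ag. free_word Ag (phi a)"
    and "compactin (cayley_complex Ag Rs phi) C"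
  shows "finite {e \<in> Lambda_edges Ag Rs phi. H_image_edge Ag Rs phi e \<inter> C \<noteq> {}}"
proof -
  have RsA: "\<forall>r \<in> Rs. set r \<subseteq> Ag \<times> UNIV" using assms(3) by (auto simp: free_word_def)
  have phiA: "\<forall>a \<in> Ag. set (phi a) \<subseteq> Ag \<times> UNIV" using assms(4) by (auto simp: free_word_def)
  define Ug where "Ug v = {q \<in> Xpts Ag Rs phi. \<exists>p\<in>q. cl Ag Rs phi v \<in> FF Ag Rs phi p}" for v
  have UnUg: "\<Union>(Ug v) = {p \<in> rawpts Ag Rs. cl Ag Rs phi v \<in> FF Ag Rs phi p}" for v
  proof
    show "\<Union>(Ug v) \<subseteq> {p \<in> rawpts Ag Rs. cl Ag Rs phi v \<in> FF Ag Rs phi p}"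
    proof
      fix p assume "p \<in> \<Union>(Ug v)"
      then obtain q p' where q: "q \<in> Xpts Ag Rs phi" "p \<in> q" "p' \<in> q" "cl Ag Rs phi v \<in> FF Ag Rs phi p'"
        unfolding Ug_def by blast
      obtain r where r: "q = xeq Ag Rs phi `` {r}" using q(1) unfolding Xpts_def quotient_def by blast
      have "FF Ag Rs phi p = FF Ag Rs phi r" "FF Ag Rs phi p' = FF Ag Rs phi r"
        using xeq_FF[OF RsA phiA] q r by (metis Image_singleton_iff)+
      moreover have "p \<in> rawpts Ag Rs" using Union_Xpts[OF RsA phiA] q by blast
      ultimately show "p \<in> {p \<in> rawpts Ag Rs. cl Ag Rs phi v \<in> FF Ag Rs phi p}" using q by simp
    qed
  next
    show "{p \<in> rawpts Ag Rs. cl Ag Rs phi v \<in> FF Ag Rs phi p} \<subseteq> \<Union>(Ug v)"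
    proof
      fix p assume p: "p \<in> {p \<in> rawpts Ag Rs. cl Ag Rs phi v \<in> FF Ag Rs phi p}"
      have "xeq Ag Rs phi `` {p} \<in> Xpts Ag Rs phi" using p unfolding Xpts_def by (auto intro: quotientI)
      moreover have "p \<in> xeq Ag Rs phi `` {p}" using xeq_refl by blast
      ultimately show "p \<in> \<Union>(Ug v)" using p unfolding Ug_def by blast
    qed
  qed
  have openUg: "openin (cayley_complex Ag Rs phi) (Ug v)" for v
    unfolding openin_cay UnUg using raw_open[OF RsA phiA] unfolding Ug_def by blast
  have CX: "C \<subseteq> Xpts Ag Rs phi"
  proof
    fix q assume "q \<in> C"
    then have "q \<in> topspace (cayley_complex Ag Rs phi)" using assms(5) unfolding compactin_def by blast
    then obtain U where "openin (cayley_complex Ag Rs phi) U" "q \<in> U" unfolding topspace_def by blast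
    then show "q \<in> Xpts Ag Rs phi" unfolding openin_cay by blast
  qed
  have cover: "C \<subseteq> \<Union>(range Ug)"
  proof
    fix q assume qC: "q \<in> C"
    then have "q \<in> Xpts Ag Rs phi" using CX by blast
    then obtain r where r: "r \<in> rawpts Ag Rs" "q = xeq Ag Rs phi `` {r}" unfolding Xpts_def quotient_def by blast
    obtain v where v: "cl Ag Rs phi v \<in> FF Ag Rs phi r" using FF_ne[OF RsA phiA] by blast
    have "r \<in> q" using r xeq_refl by blast
    then have "q \<in> Ug v" using v r \<open>q \<in> Xpts Ag Rs phi\<close> unfolding Ug_def by blast
    then show "q \<in> \<Union>(range Ug)" by blast
  qed
  obtain F where F: "finite F" "F \<subseteq> range Ug" "C \<subseteq> \<Union>F"
    using assms(5) cover openUg unfolding compactin_def by (metis rangeE)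
  obtain W where W: "finite W" "F = Ug ` W" using finite_subset_image[OF F(1,2)] by blast
  define Ev where "Ev v = {e \<in> Lambda_edges Ag Rs phi. H_image_edge Ag Rs phi e \<inter> Ug v \<noteq> {}}" for v
  have sub: "{e \<in> Lambda_edges Ag Rs phi. H_image_edge Ag Rs phi e \<inter> C \<noteq> {}} \<subseteq> (\<Union>v\<in>W. Ev v)"
    using F(3) W(2) unfolding Ev_def by blast
  have finEv: "finite (Ev v)" for v
  proof -
    define K where "K = nat (tsum v + 2)"
    define Idx where "Idx = (\<Union>a\<in>Ag. \<Union>k\<in>{..K}. (\<lambda>r. (a, k, r)) ` Rset phi a k)"
    define Sel where "Sel = (\<lambda>(a, k, r). {e \<in> Lambda_edges Ag Rs phi. \<exists>u. valid_word Ag u \<and> fst e = cls Ag Rs phi (RV u)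
       \<and> snd e = a \<and> weq Ag Rs phi v (u @ replicate k (T, True) @ r)})"
    have finIdx: "finite Idx" unfolding Idx_def
      by (intro finite_UN_I finite_imageI assms(1) finite_atMost Rset_finite)
    have finSel: "finite (Sel i)" if i: "i \<in> Idx" for i
    proof -
      obtain a k r where ikr: "i = (a, k, r)" "a \<in> Ag" "r \<in> Rset phi a k" using i unfolding Idx_def by blast
      have vs: "set (replicate k (T, True) @ r) \<subseteq> gens Ag \<times> UNIV"
        using Rset_valid[OF RsA phiA ikr(2,3)] by (auto simp: gens_def)
      show ?thesis
      proof (rule subsingleton_finite)
        fix e1 e2 assume e: "e1 \<in> Sel i" "e2 \<in> Sel i"
        obtain u1 where u1: "valid_word Ag u1" "fst e1 = cls Ag Rs phi (RV u1)" "snd e1 = a"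
          "weq Ag Rs phi v (u1 @ replicate k (T, True) @ r)" using e(1) unfolding Sel_def ikr(1) by auto
        obtain u2 where u2: "valid_word Ag u2" "fst e2 = cls Ag Rs phi (RV u2)" "snd e2 = a"
          "weq Ag Rs phi v (u2 @ replicate k (T, True) @ r)" using e(2) unfolding Sel_def ikr(1) by auto
        have "weq Ag Rs phi (u1 @ replicate k (T, True) @ r) (u2 @ replicate k (T, True) @ r)"
          using u1(4) u2(4) by (meson weq_sym weq_trans)
        then have "weq Ag Rs phi u1 u2" using weq_rcancel[OF vs] by blast
        then have "(RV u1, RV u2) \<in> xgen Ag Rs phi" using u1(1) u2(1) by (intro xgen.intros)
        then have "(RV u1, RV u2) \<in> xeq Ag Rs phi" unfolding xeq_def by blast
        then have "fst e1 = fst e2" using u1(2) u2(2) cls_eq by metis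
        then show "e1 = e2" using u1(3) u2(3) by (simp add: prod_eq_iff)
      qed
    qed
    have "Ev v \<subseteq> \<Union>(Sel ` Idx)"
    proof
      fix e assume e: "e \<in> Ev v"
      then have eL: "e \<in> Lambda_edges Ag Rs phi" unfolding Ev_def by blast
      then obtain u0 a where e0: "e = (cls Ag Rs phi (RV u0), a)" "set u0 \<subseteq> A ` Ag \<times> UNIV" "a \<in> Ag"
        unfolding Lambda_edges_def by blast
      have vu0: "valid_word Ag u0" using e0(2) by (auto simp: valid_word_def gens_def)
      define u where "u = (SOME u. valid_word Ag u \<and> cls Ag Rs phi (RV u) = fst e)"
      have uP: "valid_word Ag u \<and> cls Ag Rs phi (RV u) = fst e"
        unfolding u_def by (rule someI[of _ u0]) (use vu0 e0 in simp)
      have "RV u \<in> cls Ag Rs phi (RV u0)" using uP e0(1) xeq_refl unfolding cls_def by fastforce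
      then have "(RV u0, RV u) \<in> xeq Ag Rs phi" unfolding cls_def by blast
      then have "FF Ag Rs phi (RV u0) = FF Ag Rs phi (RV u)" by (rule xeq_FF[OF RsA phiA])
      then have "cl Ag Rs phi u0 = cl Ag Rs phi u" by (simp add: FF_def Fv_def)
      then have "weq Ag Rs phi u0 u" by (rule cl_eqD)
      then have tu: "tsum u = 0" using weq_tsum tsum_Aonly[OF e0(2)] by metis
      have "H_image_edge Ag Rs phi e = H_image Ag Rs phi u a"
        unfolding H_image_edge_def u_def using e0(1) by simp
      then obtain q where q: "q \<in> H_image Ag Rs phi u a" "q \<in> Ug v" using e unfolding Ev_def by blast
      then obtain k where qk: "q \<in> strip Ag Rs phi u a k" unfolding H_image_def by blast
      obtain p where p: "p \<in> q" "cl Ag Rs phi v \<in> FF Ag Rs phi p" using q(2) unfolding Ug_def by blast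
      obtain r where r: "r \<in> Rset phi a k" "cl Ag Rs phi v = cl Ag Rs phi (u @ replicate k (T, True) @ r)"
        using strip_point[OF RsA phiA e0(3) qk p] by blast
      have wv: "weq Ag Rs phi v (u @ replicate k (T, True) @ r)" using r(2) by (rule cl_eqD)
      then have "tsum v = int k + tsum r" using weq_tsum tu by fastforce
      moreover have "\<bar>tsum r\<bar> \<le> 2" by (rule Rset_tsum[OF r(1)])
      ultimately have "k \<le> K" unfolding K_def by linarith
      then have "(a, k, r) \<in> Idx" unfolding Idx_def using e0(3) r(1) by blast
      moreover have "e \<in> Sel (a, k, r)" unfolding Sel_def using eL uP wv e0(1) by auto
      ultimately show "e \<in> \<Union>(Sel ` Idx)" by blast
    qed
    then show ?thesis using finIdx finSel by (meson finite_UN_I finite_subset)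
  qed
  show ?thesis using sub finEv W(1) by (meson finite_UN_I finite_subset)
qed

end
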